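(* Let $p\ge1$ and let $q\in[1,\infty]$ satisfy $\frac1p+\frac1q=1$. Then the function $f(\mathbf s,\mathbf u)$ is continuous on $\mathcal S\times\mathcal U$. Additionally, for any fixed $\mathbf s\in\mathcal S$, $f(\mathbf s,\mathbf u)$ is Lipschitz continuous in $\mathbf u$ with respect to $\|\cdot\|_p$, with Lipschitz constant $L:=\max_{\mathbf y\in\mathcal Y}\|\mathbf y\|_q<\infty$.
   Context: $n\ge1$, $T>0$, $\mathcal S=\{\mathbf s\in\mathbb R^n:\mathbf s\ge0,\sum_is_i\le T\}$; $\mathcal U\subseteq\mathbb R^n$ is the support set of the service durations. Costs $\mathbf c,\mathbf d\in\mathbb R^n_+$, $C\ge0$ with $d_{i+1}-d_i\le c_{i+1}$ for $i=1,\dots,n-1$. $f(\mathbf s,\mathbf u)$ is the optimal value of $\min_{\mathbf w\in\mathbb R^{n+1},\mathbf v\in\mathbb R^n}\sum_{i=1}^n(c_iw_i+d_iv_i)+Cw_{n+1}$ s.t. $w_i-v_{i-1}=u_{i-1}+w_{i-1}-s_{i-1}$ ($i=2,\dots,n+1$), $\mathbf w\ge0,w_1=0,\mathbf v\ge0$. $\mathcal Y=\{\mathbf y\in\mathbb R^n:-y_i\le d_i\ \forall i;\ y_{i-1}-y_i\le c_i\ (i=2,\dots,n);\ y_n\le C\}$. *)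

theory Defs
  imports "HOL-Analysis.Analysis" "HOL-Library.Extended_Real"
begin

text \<open>Vectors in R^n are modelled as functions nat \<Rightarrow> real indexed by 1..n,
  vanishing outside {1..n}.\<close>

definition vecs :: "nat \<Rightarrow> (nat \<Rightarrow> real) set" where
  "vecs n = {x. \<forall>i. i \<notin> {1..n} \<longrightarrow> x i = 0}"

definition Sset :: "nat \<Rightarrow> real \<Rightarrow> (nat \<Rightarrow> real) set" where
  "Sset n T = {s \<in> vecs n. (\<forall>i\<in>{1..n}. s i \<ge> 0) \<and> (\<Sum>i=1..n. s i) \<le> T}"

definition feasible :: "nat \<Rightarrow> (nat \<Rightarrow> real) \<Rightarrow> (nat \<Rightarrow> real) \<Rightarrow> (nat \<Rightarrow> real) \<Rightarrow> (nat \<Rightarrow> real) \<Rightarrow> bool" where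
  "feasible n s u w v \<longleftrightarrow>
     (\<forall>i\<in>{2..n+1}. w i - v (i-1) = u (i-1) + w (i-1) - s (i-1)) \<and>
     (\<forall>i\<in>{1..n+1}. w i \<ge> 0) \<and> w 1 = 0 \<and> (\<forall>i\<in>{1..n}. v i \<ge> 0)"

definition obj :: "nat \<Rightarrow> (nat \<Rightarrow> real) \<Rightarrow> (nat \<Rightarrow> real) \<Rightarrow> real \<Rightarrow> (nat \<Rightarrow> real) \<Rightarrow> (nat \<Rightarrow> real) \<Rightarrow> real" where
  "obj n c d C w v = (\<Sum>i=1..n. c i * w i + d i * v i) + C * w (n+1)"

definition fval :: "nat \<Rightarrow> (nat \<Rightarrow> real) \<Rightarrow> (nat \<Rightarrow> real) \<Rightarrow> real \<Rightarrow> (nat \<Rightarrow> real) \<Rightarrow> (nat \<Rightarrow> real) \<Rightarrow> real" where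
  "fval n c d C s u = Inf {obj n c d C w v | w v. feasible n s u w v}"

definition Yset :: "nat \<Rightarrow> (nat \<Rightarrow> real) \<Rightarrow> (nat \<Rightarrow> real) \<Rightarrow> real \<Rightarrow> (nat \<Rightarrow> real) set" where
  "Yset n c d C = {y \<in> vecs n. (\<forall>i\<in>{1..n}. - y i \<le> d i) \<and>
      (\<forall>i\<in>{2..n}. y (i-1) - y i \<le> c i) \<and> y n \<le> C}"

definition pnorm :: "nat \<Rightarrow> real \<Rightarrow> (nat \<Rightarrow> real) \<Rightarrow> real" where
  "pnorm n p x = (\<Sum>i=1..n. \<bar>x i\<bar> powr p) powr (1/p)"

definition qnorm :: "nat \<Rightarrow> ereal \<Rightarrow> (nat \<Rightarrow> real) \<Rightarrow> real" where
  "qnorm n q y = (if q = \<infinity> then Max ((\<lambda>i. \<bar>y i\<bar>) ` {1..n})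
                  else (\<Sum>i=1..n. \<bar>y i\<bar> powr real_of_ereal q) powr (1 / real_of_ereal q))"

end

theory Submission
  imports Defs
begin


lemma tele:
  fixes y w v :: "nat \<Rightarrow> real"
  shows "m \<ge> 1 \<Longrightarrow> (\<Sum>i=1..m. y i * (w (i+1) - w i - v i)) =
     y m * w (m+1) + (\<Sum>i=2..m. (y (i-1) - y i) * w i) - (\<Sum>i=1..m. y i * v i) - y 1 * w 1"
proof (induction m rule: nat_induct_at_least)
  case base
  then show ?case by (simp add: algebra_simps)
next
  case (Suc m)
  then show ?case by (simp add: sum.cl_ivl_Suc algebra_simps)
qed

lemma ident:
  fixes n :: nat and y w v s u c d :: "nat \<Rightarrow> real" and C :: real
  assumes n: "n \<ge> 1" and f: "feasible n s u w v"
  shows "obj n c d C w v - (\<Sum>i=1..n. y i * (u i - s i)) =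
    (\<Sum>i=1..n. (d i + y i) * v i) + (\<Sum>i=2..n. (c i - y (i-1) + y i) * w i) + (C - y n) * w (n+1)"
proof -
  have w1: "w 1 = 0" using f by (simp add: feasible_def)
  have "(\<Sum>i=1..n. y i * (u i - s i)) = (\<Sum>i=1..n. y i * (w (i+1) - w i - v i))"
  proof (rule sum.cong)
    fix i assume "i \<in> {1..n}"
    then have "Suc i \<in> {2..n+1}" by auto
    then have "w (Suc i) - v i = u i + w i - s i" using f unfolding feasible_def by fastforce
    then show "y i * (u i - s i) = y i * (w (i+1) - w i - v i)" by simp
  qed simp
  also have "\<dots> = y n * w (n+1) + (\<Sum>i=2..n. (y (i-1) - y i) * w i) - (\<Sum>i=1..n. y i * v i)"
    using tele[OF n, of y w v] w1 by simp
  finally have e1: "(\<Sum>i=1..n. y i * (u i - s i)) = \<dots>" .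
  have e2: "(\<Sum>i=1..n. c i * w i) = (\<Sum>i=2..n. c i * w i)"
  proof -
    have "{1..n} = insert 1 {2..n}" using n by auto
    then show ?thesis using w1 by simp
  qed
  have "obj n c d C w v = (\<Sum>i=2..n. c i * w i) + (\<Sum>i=1..n. d i * v i) + C * w (n+1)"
    unfolding obj_def sum.distrib e2 by simp
  then show ?thesis unfolding e1
    by (simp add: algebra_simps sum.distrib sum_subtractf)
qed

lemma weak:
  fixes n :: nat and y w v s u c d :: "nat \<Rightarrow> real" and C :: real
  assumes n: "n \<ge> 1" and f: "feasible n s u w v" and y: "y \<in> Yset n c d C"
    and c: "\<forall>i\<in>{1..n}. c i \<ge> 0"
  shows "(\<Sum>i=1..n. y i * (u i - s i)) \<le> obj n c d C w v"
proof -
  have "0 \<le> (\<Sum>i=1..n. (d i + y i) * v i)"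
  proof (intro sum_nonneg)
    fix i assume i: "i \<in> {1..n}"
    have "- y i \<le> d i" using y i by (auto simp: Yset_def)
    then have "0 \<le> d i + y i" by simp
    moreover have "0 \<le> v i" using f i by (auto simp: feasible_def)
    ultimately show "0 \<le> (d i + y i) * v i" by simp
  qed
  moreover have "0 \<le> (\<Sum>i=2..n. (c i - y (i-1) + y i) * w i)"
  proof (intro sum_nonneg)
    fix i assume i: "i \<in> {2..n}"
    then have "y (i-1) - y i \<le> c i" using y by (auto simp: Yset_def)
    moreover have "w i \<ge> 0" using f i by (auto simp: feasible_def)
    ultimately show "0 \<le> (c i - y (i-1) + y i) * w i" by simp
  qed
  moreover have "0 \<le> (C - y n) * w (n+1)"
    using y f by (auto simp: Yset_def feasible_def)
  ultimately show ?thesis using ident[OF n f, of c d C y] by linarith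
qed

primrec Wf :: "(nat \<Rightarrow> real) \<Rightarrow> nat \<Rightarrow> real" where
  "Wf x 0 = 0"
| "Wf x (Suc i) = (if i = 0 then 0 else max 0 (Wf x i + x i))"

primrec yb :: "nat \<Rightarrow> (nat \<Rightarrow> real) \<Rightarrow> (nat \<Rightarrow> real) \<Rightarrow> real \<Rightarrow> (nat \<Rightarrow> real) \<Rightarrow> nat \<Rightarrow> real" where
  "yb n c d C W 0 = (if W (n+1) > 0 then C else - d n)"
| "yb n c d C W (Suc k) = (if W (n - k) > 0 then yb n c d C W k + c (n - k) else - d (n - Suc k))"

lemma Wf_nonneg: "Wf x i \<ge> 0"
  by (cases i) auto

lemma attain:
  fixes n :: nat and s u c d :: "nat \<Rightarrow> real" and C :: real
  assumes n: "n \<ge> 1"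
    and c: "\<forall>i\<in>{1..n}. c i \<ge> 0" and d: "\<forall>i\<in>{1..n}. d i \<ge> 0" and C: "C \<ge> 0"
    and cd: "\<forall>i\<in>{1..n-1}. d (i+1) - d i \<le> c (i+1)"
  shows "\<exists>w v y. feasible n s u w v \<and> y \<in> Yset n c d C \<and>
           obj n c d C w v = (\<Sum>i=1..n. y i * (u i - s i))"
proof -
  define x where "x = (\<lambda>i. u i - s i)"
  define w where "w = Wf x"
  define v where "v = (\<lambda>i. max 0 (- (w i + x i)))"
  define y where "y = (\<lambda>i. if 1 \<le> i \<and> i \<le> n then yb n c d C w (n - i) else 0)"
  have wS: "w (Suc i) = max 0 (w i + x i)" if "i \<ge> 1" for i
    using that by (simp add: w_def)
  have f: "feasible n s u w v"
    unfolding feasible_def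
  proof (intro conjI ballI)
    fix i assume i: "i \<in> {2..n+1}"
    then obtain j where j: "i = Suc j" "j \<ge> 1" by (cases i) auto
    show "w i - v (i - 1) = u (i - 1) + w (i - 1) - s (i - 1)"
      using wS[OF j(2)] j by (simp add: v_def x_def)
  qed (auto simp: w_def v_def Wf_nonneg)
  have yn: "y n = (if w (n+1) > 0 then C else - d n)" using n by (simp add: y_def)
  have yi: "y i = (if w (i+1) > 0 then y (i+1) + c (i+1) else - d i)" if "i \<in> {1..n-1}" for i
  proof -
    have e: "n - i = Suc (n - (i+1))" using that n by auto
    have e2: "n - (n - (i+1)) = i + 1" "n - Suc (n - (i+1)) = i" using that n by auto
    have a: "y i = yb n c d C w (Suc (n-(i+1)))" using that n e by (simp add: y_def)
    have b: "y (i+1) = yb n c d C w (n-(i+1))" using that n unfolding y_def by auto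
    show ?thesis unfolding a b yb.simps e2 by simp
  qed
  have ylow: "y i \<ge> - d i" if "i \<in> {1..n}" for i
  proof -
    have "\<forall>i. i \<in> {1..n} \<longrightarrow> n - i = k \<longrightarrow> y i \<ge> - d i" for k
    proof (induction k)
      case 0
      show ?case
      proof (intro allI impI)
        fix i assume "i \<in> {1..n}" "n - i = 0"
        then have "i = n" by auto
        moreover have "d n \<ge> 0" using d n by auto
        ultimately show "y i \<ge> - d i" using yn C by auto
      qed
    next
      case (Suc k)
      show ?case
      proof (intro allI impI)
        fix i assume i: "i \<in> {1..n}" "n - i = Suc k"
        then have i1: "i \<in> {1..n-1}" "i + 1 \<in> {1..n}" "n - (i+1) = k" by auto
        have "y (i+1) \<ge> - d (i+1)" using Suc i1 by blast
        moreover have "d (i+1) - d i \<le> c (i+1)" using cd i1 by blast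
        ultimately show "y i \<ge> - d i" using yi[OF i1(1)] by auto
      qed
    qed
    then show ?thesis using that by blast
  qed
  have yY: "y \<in> Yset n c d C"
    unfolding Yset_def vecs_def
  proof (intro CollectI conjI ballI allI impI)
    fix i assume "i \<in> {2..n}"
    then have i1: "i - 1 \<in> {1..n-1}" "i - 1 + 1 = i" "i \<in> {1..n}" "i - 1 + 1 \<in> {1..n}" by auto
    have "d i - d (i-1) \<le> c i" using cd i1 by (metis i1(2))
    then show "y (i - 1) - y i \<le> c i" using yi[OF i1(1)] ylow[OF i1(3)] i1(2) by auto
  next
    have "d n \<ge> 0" using d n by auto
    then show "y n \<le> C" using yn C by auto
  next
    fix i assume "i \<in> {1..n}"
    then show "- y i \<le> d i" using ylow by force
  qed (auto simp: y_def)
  have "obj n c d C w v - (\<Sum>i=1..n. y i * (u i - s i)) = 0"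
  proof -
    have "(\<Sum>i=1..n. (d i + y i) * v i) = 0"
    proof (intro sum.neutral ballI)
      fix i assume i: "i \<in> {1..n}"
      show "(d i + y i) * v i = 0"
      proof (cases "v i > 0")
        case True
        then have "w (i+1) = 0" using wS[of i] i by (auto simp: v_def)
        then have "y i = - d i"
        proof (cases "i = n")
          case True then show ?thesis using yn \<open>w (i+1) = 0\<close> by simp
        next
          case False then have "i \<in> {1..n-1}" using i by auto
          then show ?thesis using yi \<open>w (i+1) = 0\<close> by simp
        qed
        then show ?thesis by simp
      qed (auto simp: v_def)
    qed
    moreover have "(\<Sum>i=2..n. (c i - y (i-1) + y i) * w i) = 0"
    proof (intro sum.neutral ballI)
      fix i assume i: "i \<in> {2..n}"
      then have i1: "i - 1 \<in> {1..n-1}" "i - 1 + 1 = i" by auto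
      show "(c i - y (i-1) + y i) * w i = 0"
        using yi[OF i1(1)] i1(2) Wf_nonneg[of x i] by (cases "w i > 0") (auto simp: w_def)
    qed
    moreover have "(C - y n) * w (n+1) = 0"
      using yn Wf_nonneg[of x "n+1"] by (cases "w (n+1) > 0") (auto simp: w_def)
    ultimately show ?thesis using ident[OF n f, of c d C y] by simp
  qed
  then show ?thesis using f yY by auto
qed



lemma fval_char:
  fixes n :: nat and s u c d :: "nat \<Rightarrow> real" and C :: real
  assumes n: "n \<ge> 1"
    and c: "\<forall>i\<in>{1..n}. c i \<ge> 0" and d: "\<forall>i\<in>{1..n}. d i \<ge> 0" and C: "C \<ge> 0"
    and cd: "\<forall>i\<in>{1..n-1}. d (i+1) - d i \<le> c (i+1)"
  shows "(\<forall>y\<in>Yset n c d C. (\<Sum>i=1..n. y i * (u i - s i)) \<le> fval n c d C s u) \<and>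
         (\<exists>y\<in>Yset n c d C. fval n c d C s u = (\<Sum>i=1..n. y i * (u i - s i)))"
proof -
  obtain w v y0 where f: "feasible n s u w v" and y0: "y0 \<in> Yset n c d C"
    and e: "obj n c d C w v = (\<Sum>i=1..n. y0 i * (u i - s i))"
    using attain[OF n c d C cd] by blast
  have "fval n c d C s u = obj n c d C w v"
    unfolding fval_def
  proof (rule cInf_eq_minimum)
    show "obj n c d C w v \<in> {obj n c d C w v |w v. feasible n s u w v}" using f by blast
  next
    fix z assume "z \<in> {obj n c d C w v |w v. feasible n s u w v}"
    then obtain w' v' where "feasible n s u w' v'" "z = obj n c d C w' v'" by blast
    then show "obj n c d C w v \<le> z" using weak[OF n _ y0 c] e by simp
  qed
  moreover have "\<forall>y\<in>Yset n c d C. (\<Sum>i=1..n. y i * (u i - s i)) \<le> obj n c d C w v"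
    using weak[OF n f _ c] by blast
  ultimately show ?thesis using e y0 by auto
qed

lemma Ybound:
  fixes n :: nat and c d :: "nat \<Rightarrow> real" and C :: real
  assumes n: "n \<ge> 1"
    and c: "\<forall>i\<in>{1..n}. c i \<ge> 0" and d: "\<forall>i\<in>{1..n}. d i \<ge> 0" and C: "C \<ge> 0"
    and y: "y \<in> Yset n c d C"
  shows "\<bar>y i\<bar> \<le> C + (\<Sum>j=1..n. c j) + (\<Sum>j=1..n. d j)"
proof (cases "i \<in> {1..n}")
  case False
  then have "y i = 0" using y by (auto simp: Yset_def vecs_def)
  moreover have "(\<Sum>j=1..n. c j) \<ge> 0" "(\<Sum>j=1..n. d j) \<ge> 0" using c d by (auto intro: sum_nonneg)
  ultimately show ?thesis using C by simp
next
  case True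
  have up: "\<forall>i. i \<in> {1..n} \<longrightarrow> n - i = k \<longrightarrow> y i \<le> C + (\<Sum>j=i+1..n. c j)" for k
  proof (induction k)
    case 0
    show ?case
    proof (intro allI impI)
      fix i assume "i \<in> {1..n}" "n - i = 0"
      then have "i = n" by auto
      then show "y i \<le> C + (\<Sum>j=i+1..n. c j)" using y by (auto simp: Yset_def)
    qed
  next
    case (Suc k)
    show ?case
    proof (intro allI impI)
      fix i assume i: "i \<in> {1..n}" "n - i = Suc k"
      then have i1: "i + 1 \<in> {2..n}" "i + 1 \<in> {1..n}" "n - (i+1) = k" by auto
      have "y (i+1) \<le> C + (\<Sum>j=i+2..n. c j)" using Suc i1 by force
      moreover have "y (i+1-1) - y (i+1) \<le> c (i+1)" using y i1 unfolding Yset_def by blast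
      moreover have "(\<Sum>j=i+1..n. c j) = c (i+1) + (\<Sum>j=i+2..n. c j)"
        using i1 by (simp add: sum.atLeast_Suc_atMost)
      ultimately show "y i \<le> C + (\<Sum>j=i+1..n. c j)" by simp
    qed
  qed
  have "(\<Sum>j=i+1..n. c j) \<le> (\<Sum>j=1..n. c j)"
    using c by (intro sum_mono2) auto
  moreover have "y i \<le> C + (\<Sum>j=i+1..n. c j)" using up True by blast
  moreover have "(\<Sum>j=1..n. d j) \<ge> 0" using d by (auto intro: sum_nonneg)
  ultimately have "y i \<le> C + (\<Sum>j=1..n. c j) + (\<Sum>j=1..n. d j)" by linarith
  moreover have "- y i \<le> d i" using y True by (auto simp: Yset_def)
  moreover have "d i \<le> (\<Sum>j=1..n. d j)" using d True by (intro member_le_sum) auto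
  moreover have "(\<Sum>j=1..n. c j) \<ge> 0" using c by (auto intro: sum_nonneg)
  ultimately show ?thesis using C by linarith
qed

lemma holder:
  fixes a b :: "nat \<Rightarrow> real"
  assumes A: "finite A" and a: "\<forall>i\<in>A. a i \<ge> 0" and b: "\<forall>i\<in>A. b i \<ge> 0"
    and p: "p > 1" and q: "q > 1" and pq: "1/p + 1/q = 1"
  shows "(\<Sum>i\<in>A. a i * b i) \<le> (\<Sum>i\<in>A. a i powr p) powr (1/p) * (\<Sum>i\<in>A. b i powr q) powr (1/q)"
proof -
  define P where "P = (\<Sum>i\<in>A. a i powr p)"
  define Q where "Q = (\<Sum>i\<in>A. b i powr q)"
  have P0: "P \<ge> 0" "Q \<ge> 0" unfolding P_def Q_def by (auto intro: sum_nonneg)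
  show ?thesis
  proof (cases "P = 0 \<or> Q = 0")
    case True
    have h1: "P = 0 \<Longrightarrow> \<forall>i\<in>A. a i powr p = 0"
      unfolding P_def by (subst (asm) sum_nonneg_eq_0_iff[OF A]) auto
    have h2: "Q = 0 \<Longrightarrow> \<forall>i\<in>A. b i powr q = 0"
      unfolding Q_def by (subst (asm) sum_nonneg_eq_0_iff[OF A]) auto
    from True h1 h2 have "(\<forall>i\<in>A. a i powr p = 0) \<or> (\<forall>i\<in>A. b i powr q = 0)" by blast
    then have "(\<forall>i\<in>A. a i = 0) \<or> (\<forall>i\<in>A. b i = 0)" by auto
    then have "(\<Sum>i\<in>A. a i * b i) = 0" by auto
    then show ?thesis by simp
  next
    case False
    then have Pp: "P > 0" "Q > 0" using P0 by auto
    define al where "al = P powr (1/p)"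
    define be where "be = Q powr (1/q)"
    have al: "al > 0" "be > 0" using Pp by (auto simp: al_def be_def)
    have alp: "al powr p = P" "be powr q = Q" using Pp p q by (auto simp: al_def be_def powr_powr)
    have "(\<Sum>i\<in>A. (a i / al) * (b i / be)) \<le> (\<Sum>i\<in>A. (a i / al) powr p / p + (b i / be) powr q / q)"
      using a b al by (intro sum_mono Youngs_inequality[OF p q pq]) auto
    also have "\<dots> = (\<Sum>i\<in>A. a i powr p / (P * p) + b i powr q / (Q * q))"
    proof (intro sum.cong refl)
      fix i assume i: "i \<in> A"
      have "(a i / al) powr p = a i powr p / P"
        using a i al alp by (simp add: powr_divide)
      moreover have "(b i / be) powr q = b i powr q / Q"
        using b i al alp by (simp add: powr_divide)
      ultimately show "(a i / al) powr p / p + (b i / be) powr q / q = a i powr p / (P * p) + b i powr q / (Q * q)"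
        by simp
    qed
    also have "\<dots> = (\<Sum>i\<in>A. a i powr p) / (P * p) + (\<Sum>i\<in>A. b i powr q) / (Q * q)"
      by (simp only: sum.distrib sum_divide_distrib)
    also have "\<dots> = P / (P * p) + Q / (Q * q)"
      by (simp only: P_def Q_def)
    also have "\<dots> = 1" using Pp pq by simp
    finally have "(\<Sum>i\<in>A. a i * b i) / (al * be) \<le> 1"
      by (simp add: sum_divide_distrib)
    then show ?thesis using al by (simp add: al_def be_def P_def Q_def pos_divide_le_eq)
  qed
qed

lemma powr_one_abs: "\<bar>x::real\<bar> powr 1 = \<bar>x\<bar>" by simp

lemma holder_qp:
  fixes y z :: "nat \<Rightarrow> real" and p :: real and q :: ereal
  assumes p: "p \<ge> 1" and q: "q \<ge> 1" and pq: "ereal (1/p) + inverse q = 1" and n: "n \<ge> 1"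
  shows "(\<Sum>i=1..n. y i * z i) \<le> qnorm n q y * pnorm n p z"
proof (cases "q = \<infinity>")
  case True
  then have "p = 1" using pq p by simp
  define M where "M = Max ((\<lambda>i. \<bar>y i\<bar>) ` {1..n})"
  have M: "\<bar>y i\<bar> \<le> M" if "i \<in> {1..n}" for i
    unfolding M_def using that by (intro Max_ge) auto
  have "(\<Sum>i=1..n. y i * z i) \<le> (\<Sum>i=1..n. M * \<bar>z i\<bar>)"
  proof (intro sum_mono)
    fix i assume "i \<in> {1..n}"
    then have "\<bar>y i\<bar> * \<bar>z i\<bar> \<le> M * \<bar>z i\<bar>" using M by (intro mult_right_mono) auto
    moreover have "y i * z i \<le> \<bar>y i\<bar> * \<bar>z i\<bar>" by (metis abs_ge_self abs_mult)
    ultimately show "y i * z i \<le> M * \<bar>z i\<bar>" by linarith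
  qed
  also have "\<dots> = qnorm n q y * pnorm n p z"
    using True \<open>p = 1\<close> by (simp add: qnorm_def pnorm_def M_def sum_distrib_left sum_nonneg)
  finally show ?thesis .
next
  case False
  then obtain r where r: "q = ereal r" using q by (cases q) auto
  then have r1: "r \<ge> 1" using q by simp
  then have "inverse q = ereal (1/r)" using r by (simp add: inverse_eq_divide)
  then have pr: "1/p + 1/r = 1" using pq by simp
  have "r \<noteq> 1" using pr p by auto
  then have r1': "r > 1" using r1 by simp
  have "p \<noteq> 1" using pr r1' by auto
  then have p1: "p > 1" using p by simp
  have "(\<Sum>i=1..n. y i * z i) \<le> (\<Sum>i=1..n. \<bar>z i\<bar> * \<bar>y i\<bar>)"
    by (intro sum_mono) (metis abs_ge_self abs_mult mult.commute)
  also have "\<dots> \<le> (\<Sum>i=1..n. \<bar>z i\<bar> powr p) powr (1/p) * (\<Sum>i=1..n. \<bar>y i\<bar> powr r) powr (1/r)"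
    by (intro holder p1 r1' pr) auto
  also have "\<dots> = qnorm n q y * pnorm n p z"
    using r False by (simp add: qnorm_def pnorm_def)
  finally show ?thesis .
qed



lemma closed_ball_collect:
  assumes "\<And>i. i \<in> A \<Longrightarrow> closed {x. Q i x}"
  shows "closed {x. \<forall>i\<in>A. Q i x}"
proof -
  have "{x. \<forall>i\<in>A. Q i x} = (\<Inter>i\<in>A. {x. Q i x})" by auto
  then show ?thesis using assms by (simp add: closed_INT)
qed

lemma coord_cont: "continuous_on S (\<lambda>x::nat \<Rightarrow> real. x i)"
  by (rule continuous_on_subset[OF continuous_on_product_coordinates]) simp

lemma Ycompact:
  fixes n :: nat and c d :: "nat \<Rightarrow> real" and C :: real
  assumes n: "n \<ge> 1"
    and c: "\<forall>i\<in>{1..n}. c i \<ge> 0" and d: "\<forall>i\<in>{1..n}. d i \<ge> 0" and C: "C \<ge> 0"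
  shows "compact (Yset n c d C)"
proof -
  define B where "B = C + (\<Sum>j=1..n. c j) + (\<Sum>j=1..n. d j)"
  define K where "K = PiE UNIV (\<lambda>i. if i \<in> {1..n} then {-B..B} else {0::real})"
  have "compactin (product_topology (\<lambda>i. euclidean) UNIV) K"
    unfolding K_def by (subst compactin_PiE) auto
  then have cK: "compact K" by (simp add: euclidean_product_topology)
  have sub: "Yset n c d C \<subseteq> K"
  proof
    fix y assume y: "y \<in> Yset n c d C"
    have "y i \<in> (if i \<in> {1..n} then {-B..B} else {0})" for i
    proof (cases "i \<in> {1..n}")
      case True
      then show ?thesis using Ybound[OF n c d C y, of i] unfolding B_def by (simp add: abs_le_iff)
    next
      case False
      then show ?thesis using y by (auto simp: Yset_def vecs_def)
    qed
    then show "y \<in> K" unfolding K_def by auto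
  qed
  have cl: "closed (Yset n c d C)"
  proof -
    have e: "Yset n c d C = {y. (\<forall>i\<in>-{1..n}. y i = 0)} \<inter> {y. \<forall>i\<in>{1..n}. - y i \<le> d i}
       \<inter> {y. \<forall>i\<in>{2..n}. y (i-1) - y i \<le> c i} \<inter> {y. y n \<le> C}"
      by (auto simp: Yset_def vecs_def)
    show ?thesis unfolding e
      by (intro closed_Int closed_ball_collect closed_Collect_eq closed_Collect_le continuous_intros coord_cont)
  qed
  have "Yset n c d C = K \<inter> Yset n c d C" using sub by auto
  then show ?thesis using compact_Int_closed[OF cK cl] by simp
qed


lemma cont_Max:
  fixes F :: "'i \<Rightarrow> 'a::topological_space \<Rightarrow> real"
  assumes "finite A" "A \<noteq> {}" "\<And>i. i \<in> A \<Longrightarrow> continuous_on S (F i)"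
  shows "continuous_on S (\<lambda>x. Max ((\<lambda>i. F i x) ` A))"
  using assms
proof (induction A rule: finite_ne_induct)
  case (singleton a)
  then show ?case by simp
next
  case (insert a A)
  have "continuous_on S (\<lambda>x. max (F a x) (Max ((\<lambda>i. F i x) ` A)))"
  proof (rule continuous_on_max)
    show "continuous_on S (F a)" using insert.prems by simp
    show "continuous_on S (\<lambda>x. Max ((\<lambda>i. F i x) ` A))" using insert by simp
  qed
  moreover have "Max ((\<lambda>i. F i x) ` insert a A) = max (F a x) (Max ((\<lambda>i. F i x) ` A))" for x
    using insert by simp
  ultimately show ?case by simp
qed

lemma qnorm_cont:
  assumes n: "n \<ge> 1" and q: "q \<ge> 1"
  shows "continuous_on S (qnorm n q)"
proof (cases "q = \<infinity>")
  case True
  have "continuous_on S (\<lambda>y. Max ((\<lambda>i. \<bar>y i\<bar>) ` {1..n}))"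
    using n by (intro cont_Max continuous_on_rabs coord_cont) auto
  then show ?thesis using True by (simp add: qnorm_def[abs_def])
next
  case False
  then obtain r where r: "q = ereal r" using q by (cases q) auto
  then have r1: "r \<ge> 1" using q by simp
  have ci: "continuous_on S (\<lambda>y. \<bar>y i\<bar> powr r)" for i
    using r1 by (intro continuous_on_powr' continuous_on_rabs coord_cont continuous_on_const) auto
  have "continuous_on S (\<lambda>y. (\<Sum>i=1..n. \<bar>y i\<bar> powr r) powr (1 / r))"
  proof (rule continuous_on_powr', intro continuous_intros ci, intro continuous_intros, intro ballI conjI impI)
    fix y assume "y \<in> S"
    show "0 \<le> (\<Sum>i=1..n. \<bar>y i\<bar> powr r)" by (auto intro: sum_nonneg)
    show "0 < 1 / r" using r1 by simp
  qed
  then show ?thesis using False r by (simp add: qnorm_def[abs_def])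
qed

lemma diff_bound:
  fixes n :: nat and c d :: "nat \<Rightarrow> real" and C :: real
  assumes n: "n \<ge> 1"
    and c: "\<forall>i\<in>{1..n}. c i \<ge> 0" and d: "\<forall>i\<in>{1..n}. d i \<ge> 0" and C: "C \<ge> 0"
    and cd: "\<forall>i\<in>{1..n-1}. d (i+1) - d i \<le> c (i+1)"
  shows "\<exists>y\<in>Yset n c d C. fval n c d C s1 u1 - fval n c d C s2 u2
     \<le> (\<Sum>i=1..n. y i * ((u1 i - s1 i) - (u2 i - s2 i)))"
proof -
  obtain y where y: "y \<in> Yset n c d C" and e: "fval n c d C s1 u1 = (\<Sum>i=1..n. y i * (u1 i - s1 i))"
    using fval_char[OF n c d C cd, of u1 s1] by blast
  have "(\<Sum>i=1..n. y i * (u2 i - s2 i)) \<le> fval n c d C s2 u2"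
    using fval_char[OF n c d C cd, of u2 s2] y by blast
  then have "fval n c d C s1 u1 - fval n c d C s2 u2 \<le> (\<Sum>i=1..n. y i * (u1 i - s1 i)) - (\<Sum>i=1..n. y i * (u2 i - s2 i))"
    using e by simp
  also have "\<dots> = (\<Sum>i=1..n. y i * ((u1 i - s1 i) - (u2 i - s2 i)))"
    by (simp add: sum_subtractf[symmetric] algebra_simps)
  finally show ?thesis using y by blast
qed



theorem lemma5:
  fixes n :: nat and T C p :: real and q :: ereal
    and c d :: "nat \<Rightarrow> real" and U :: "(nat \<Rightarrow> real) set"
  assumes n: "n \<ge> 1" and T: "T > 0"
    and U: "U \<subseteq> vecs n"
    and c: "\<forall>i\<in>{1..n}. c i \<ge> 0" and d: "\<forall>i\<in>{1..n}. d i \<ge> 0" and C: "C \<ge> 0"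
    and cd: "\<forall>i\<in>{1..n-1}. d (i+1) - d i \<le> c (i+1)"
    and p: "p \<ge> 1" and q: "q \<ge> 1" and pq: "ereal (1/p) + inverse q = 1"
  shows "continuous_on (Sset n T \<times> U) (\<lambda>(s, u). fval n c d C s u)
       \<and> (\<exists>L. (\<exists>y\<in>Yset n c d C. qnorm n q y = L) \<and> (\<forall>y\<in>Yset n c d C. qnorm n q y \<le> L)
            \<and> (\<forall>s\<in>Sset n T. \<forall>u1\<in>U. \<forall>u2\<in>U.
                 \<bar>fval n c d C s u1 - fval n c d C s u2\<bar> \<le> L * pnorm n p (\<lambda>i. u1 i - u2 i)))"
proof
  define F where "F = (\<lambda>z::(nat \<Rightarrow> real) \<times> (nat \<Rightarrow> real). fval n c d C (fst z) (snd z))"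
  define B where "B = C + (\<Sum>j=1..n. c j) + (\<Sum>j=1..n. d j)"
  define D where "D = (\<lambda>z z0::(nat \<Rightarrow> real) \<times> (nat \<Rightarrow> real).
     (\<Sum>i=1..n. \<bar>(snd z i - fst z i) - (snd z0 i - fst z0 i)\<bar>))"
  have half: "F z - F z0 \<le> B * D z z0" for z z0
  proof -
    obtain y where y: "y \<in> Yset n c d C" and le: "F z - F z0 \<le>
        (\<Sum>i=1..n. y i * ((snd z i - fst z i) - (snd z0 i - fst z0 i)))"
      using diff_bound[OF n c d C cd, of "fst z" "snd z" "fst z0" "snd z0"] unfolding F_def by blast
    note le
    also have "\<dots> \<le> (\<Sum>i=1..n. B * \<bar>(snd z i - fst z i) - (snd z0 i - fst z0 i)\<bar>)"
    proof (intro sum_mono)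
      fix i assume "i \<in> {1..n}"
      have "\<bar>y i\<bar> \<le> B" using Ybound[OF n c d C y] unfolding B_def by blast
      then have "\<bar>y i\<bar> * \<bar>(snd z i - fst z i) - (snd z0 i - fst z0 i)\<bar>
                 \<le> B * \<bar>(snd z i - fst z i) - (snd z0 i - fst z0 i)\<bar>"
        by (intro mult_right_mono) auto
      moreover have "y i * ((snd z i - fst z i) - (snd z0 i - fst z0 i))
           \<le> \<bar>y i\<bar> * \<bar>(snd z i - fst z i) - (snd z0 i - fst z0 i)\<bar>"
        by (metis abs_ge_self abs_mult)
      ultimately show "y i * ((snd z i - fst z i) - (snd z0 i - fst z0 i))
           \<le> B * \<bar>(snd z i - fst z i) - (snd z0 i - fst z0 i)\<bar>" by linarith
    qed
    also have "\<dots> = B * D z z0" by (simp add: D_def sum_distrib_left)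
    finally show ?thesis .
  qed
  have Dsym: "D z z0 = D z0 z" for z z0
    unfolding D_def by (intro sum.cong refl) linarith
  have absb: "\<bar>F z - F z0\<bar> \<le> B * D z z0" for z z0
    using half[of z z0] half[of z0 z] unfolding abs_le_iff Dsym[of z0 z] by linarith
  have contD: "continuous_on UNIV (\<lambda>z. B * D z z0)" for z0
    unfolding D_def
    by (intro continuous_intros continuous_on_product_then_coordinatewise continuous_on_fst continuous_on_snd continuous_on_id)
  have "continuous_on (Sset n T \<times> U) F"
    unfolding continuous_on_def
  proof (intro ballI)
    fix z0 assume z0: "z0 \<in> Sset n T \<times> U"
    have "((\<lambda>z. B * D z z0) \<longlongrightarrow> B * D z0 z0) (at z0 within Sset n T \<times> U)"
      using contD[of z0] unfolding continuous_on_def by (meson UNIV_I tendsto_within_subset subset_UNIV)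
    moreover have "D z0 z0 = 0" by (simp add: D_def)
    ultimately have t0: "((\<lambda>z. B * D z z0) \<longlongrightarrow> 0) (at z0 within Sset n T \<times> U)" by simp
    have "((\<lambda>z. F z - F z0) \<longlongrightarrow> 0) (at z0 within Sset n T \<times> U)"
      by (rule Lim_null_comparison[OF _ t0]) (simp add: absb)
    then show "(F \<longlongrightarrow> F z0) (at z0 within Sset n T \<times> U)"
      by (simp add: Lim_null[symmetric])
  qed
  moreover have "(\<lambda>(s, u). fval n c d C s u) = F" unfolding F_def by auto
  ultimately show "continuous_on (Sset n T \<times> U) (\<lambda>(s, u). fval n c d C s u)" by simp
next
  have "(\<lambda>i. 0) \<in> Yset n c d C" using c d C by (auto simp: Yset_def vecs_def)
  then obtain ym where ym: "ym \<in> Yset n c d C" and ymax: "\<forall>y\<in>Yset n c d C. qnorm n q y \<le> qnorm n q ym"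
    using continuous_attains_sup[OF Ycompact[OF n c d C] _ qnorm_cont[OF n q]] by blast
  define L where "L = qnorm n q ym"
  have pn: "pnorm n p x \<ge> 0" for x by (simp add: pnorm_def)
  have one: "fval n c d C s u1 - fval n c d C s u2 \<le> L * pnorm n p (\<lambda>i. u1 i - u2 i)" for s u1 u2
  proof -
    obtain y where y: "y \<in> Yset n c d C" and le: "fval n c d C s u1 - fval n c d C s u2 \<le>
        (\<Sum>i=1..n. y i * ((u1 i - s i) - (u2 i - s i)))"
      using diff_bound[OF n c d C cd, of s u1 s u2] by blast
    note le
    also have "\<dots> = (\<Sum>i=1..n. y i * (u1 i - u2 i))" by simp
    also have "\<dots> \<le> qnorm n q y * pnorm n p (\<lambda>i. u1 i - u2 i)"
      using holder_qp[OF p q pq n] by simp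
    also have "\<dots> \<le> L * pnorm n p (\<lambda>i. u1 i - u2 i)"
      using ymax y pn unfolding L_def by (intro mult_right_mono) auto
    finally show ?thesis .
  qed
  have pnsym: "pnorm n p (\<lambda>i. u2 i - u1 i) = pnorm n p (\<lambda>i. u1 i - u2 i)" for u1 u2 :: "nat \<Rightarrow> real"
    unfolding pnorm_def by (simp add: abs_minus_commute)
  show "\<exists>L. (\<exists>y\<in>Yset n c d C. qnorm n q y = L) \<and> (\<forall>y\<in>Yset n c d C. qnorm n q y \<le> L)
            \<and> (\<forall>s\<in>Sset n T. \<forall>u1\<in>U. \<forall>u2\<in>U.
                 \<bar>fval n c d C s u1 - fval n c d C s u2\<bar> \<le> L * pnorm n p (\<lambda>i. u1 i - u2 i))"
  proof (intro exI conjI ballI)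
    show "\<exists>y\<in>Yset n c d C. qnorm n q y = L" using ym L_def by blast
    show "\<And>y. y \<in> Yset n c d C \<Longrightarrow> qnorm n q y \<le> L" using ymax L_def by blast
    fix s u1 u2
    show "\<bar>fval n c d C s u1 - fval n c d C s u2\<bar> \<le> L * pnorm n p (\<lambda>i. u1 i - u2 i)"
      using one[of s u1 u2] one[of s u2 u1] unfolding abs_le_iff pnsym[of u1 u2] by linarith
  qed
qed

end
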